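(* Let $(X,Y,\tilde Y)$ be jointly distributed with $X\in\mathcal{X}$ and $Y,\tilde Y\in\{0,1\}$; let $Q$ be the distribution of $(X,Y)$ and $P$ the distribution of $(X,\tilde Y)$, so $P_X=Q_X$. Let $\eta_Q(x)=\Pr(Y=1\mid X=x)$, $\eta_P(x)=\Pr(\tilde Y=1\mid X=x)$ and $\rho_i(x)=\Pr(\tilde Y\ne i\mid Y=i,X=x)$ for $i\in\{0,1\}$. Suppose $\rho_1\equiv0$ and there is a strictly increasing function $\psi$ with $\rho_0(x)=\psi(\eta_Q(x))$ for all $x$. Then there exists a strictly increasing function $\phi$ such that $\eta_P(x)=\phi(\eta_Q(x))$ for all $x$. *)

theory Defs
  imports "HOL-Probability.Probability"
begin

text \<open>f is a version of the conditional probability x \<mapsto> Pr(E | X = x):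
  a measurable [0,1]-valued function on the feature space N with
  Pr(X \<in> A \<and> E) = \<integral>_A f dP_X for all measurable A.\<close>
definition is_cond_prob ::
  "'a measure \<Rightarrow> ('a \<Rightarrow> 'b) \<Rightarrow> 'b measure \<Rightarrow> ('a \<Rightarrow> bool) \<Rightarrow> ('b \<Rightarrow> real) \<Rightarrow> bool" where
  "is_cond_prob M X N E f \<longleftrightarrow>
     f \<in> borel_measurable N \<and> (\<forall>x. 0 \<le> f x \<and> f x \<le> 1) \<and>
     (\<forall>A\<in>sets N. measure M {\<omega>\<in>space M. X \<omega> \<in> A \<and> E \<omega>}
                   = (\<integral>x\<in>A. f x \<partial>(distr M N X)))"

text \<open>f is a version of x \<mapsto> Pr(E | B, X = x), where g is a version of
  x \<mapsto> Pr(B | X = x):  Pr(X \<in> A \<and> B \<and> E) = \<integral>_A f g dP_X.\<close>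
definition is_cond_prob2 ::
  "'a measure \<Rightarrow> ('a \<Rightarrow> 'b) \<Rightarrow> 'b measure \<Rightarrow> ('a \<Rightarrow> bool) \<Rightarrow> ('a \<Rightarrow> bool)
     \<Rightarrow> ('b \<Rightarrow> real) \<Rightarrow> ('b \<Rightarrow> real) \<Rightarrow> bool" where
  "is_cond_prob2 M X N B E g f \<longleftrightarrow>
     f \<in> borel_measurable N \<and> (\<forall>x. 0 \<le> f x \<and> f x \<le> 1) \<and>
     (\<forall>A\<in>sets N. measure M {\<omega>\<in>space M. X \<omega> \<in> A \<and> B \<omega> \<and> E \<omega>}
                   = (\<integral>x\<in>A. f x * g x \<partial>(distr M N X)))"

end

theory Submission
  imports Defs
begin

lemma phi_mono:
  fixes psi :: "real \<Rightarrow> real"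
  assumes "strict_mono_on {0..1} psi"
  shows "strict_mono_on {0..1} (\<lambda>t. if psi t \<le> 1 then t + (1 - t) * psi t else t + 1)"
proof (rule strict_mono_onI)
  fix s t :: real assume s: "s \<in> {0..1}" and t: "t \<in> {0..1}" and st: "s < t"
  have ps: "psi s < psi t" using assms s t st by (simp add: strict_mono_on_def)
  show "(if psi s \<le> 1 then s + (1 - s) * psi s else s + 1)
        < (if psi t \<le> 1 then t + (1 - t) * psi t else t + 1)"
  proof (cases "psi t \<le> 1")
    case True
    then have "psi s < 1" using ps by simp
    have a: "(t - s) * (1 - psi s) > 0" using st \<open>psi s < 1\<close> by simp
    have b: "(1 - t) * (psi t - psi s) \<ge> 0" using t ps by simp
    have "t + (1 - t) * psi t - (s + (1 - s) * psi s) = (t - s) * (1 - psi s) + (1 - t) * (psi t - psi s)"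
      by (simp add: algebra_simps)
    then show ?thesis using True \<open>psi s < 1\<close> a b by simp
  next
    case False
    show ?thesis
    proof (cases "psi s \<le> 1")
      case True
      have h: "(1 - s) * psi s \<le> (1 - s) * 1" using s True by (intro mult_left_mono) auto
      have "s + (1 - s) * psi s < t + 1" using h s t st by (simp add: algebra_simps)
      then show ?thesis using False True by simp
    next
      case False2: False
      then show ?thesis using False st by simp
    qed
  qed
qed

theorem lemma1:
  fixes M :: "'a measure" and N :: "'b measure"
    and X :: "'a \<Rightarrow> 'b" and Y Yt :: "'a \<Rightarrow> nat"
    and etaQ etaP rho0 rho1 :: "'b \<Rightarrow> real"
  fixes psi :: "real \<Rightarrow> real"
  assumes "prob_space M"
    and "X \<in> measurable M N"
    and "Y \<in> measurable M (count_space UNIV)"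
    and "Yt \<in> measurable M (count_space UNIV)"
    and "\<forall>\<omega>\<in>space M. Y \<omega> \<in> {0, 1} \<and> Yt \<omega> \<in> {0, 1}"
    and "is_cond_prob M X N (\<lambda>\<omega>. Y \<omega> = 1) etaQ"
    and "is_cond_prob M X N (\<lambda>\<omega>. Yt \<omega> = 1) etaP"
    and "is_cond_prob2 M X N (\<lambda>\<omega>. Y \<omega> = 0) (\<lambda>\<omega>. Yt \<omega> \<noteq> 0) (\<lambda>x. 1 - etaQ x) rho0"
    and "is_cond_prob2 M X N (\<lambda>\<omega>. Y \<omega> = 1) (\<lambda>\<omega>. Yt \<omega> \<noteq> 1) etaQ rho1"
    and "\<forall>x. rho1 x = 0"
    and "strict_mono_on {0..1} psi"
    and "\<forall>x. rho0 x = psi (etaQ x)"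
  shows "\<exists>phi :: real \<Rightarrow> real. strict_mono_on {0..1} phi \<and>
           (AE x in distr M N X. etaP x = phi (etaQ x))"
proof -
  interpret P: prob_space M by fact
  define D where "D = distr M N X"
  have [measurable]: "X \<in> measurable M N" "Y \<in> measurable M (count_space UNIV)"
    "Yt \<in> measurable M (count_space UNIV)" using assms(2-4) by auto
  interpret D: prob_space D unfolding D_def by (rule P.prob_space_distr) simp
  have sD: "sets D = sets N" unfolding D_def by simp
  have eQ[measurable]: "etaQ \<in> borel_measurable N" and eQb: "\<And>x. 0 \<le> etaQ x \<and> etaQ x \<le> 1"
    and eQi: "\<And>A. A \<in> sets N \<Longrightarrow> measure M {\<omega>\<in>space M. X \<omega> \<in> A \<and> Y \<omega> = 1} = (\<integral>x\<in>A. etaQ x \<partial>D)"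
    using assms(6) unfolding is_cond_prob_def D_def by auto
  have eP[measurable]: "etaP \<in> borel_measurable N" and ePb: "\<And>x. 0 \<le> etaP x \<and> etaP x \<le> 1"
    and ePi: "\<And>A. A \<in> sets N \<Longrightarrow> measure M {\<omega>\<in>space M. X \<omega> \<in> A \<and> Yt \<omega> = 1} = (\<integral>x\<in>A. etaP x \<partial>D)"
    using assms(7) unfolding is_cond_prob_def D_def by auto
  have r0[measurable]: "rho0 \<in> borel_measurable N" and r0b: "\<And>x. 0 \<le> rho0 x \<and> rho0 x \<le> 1"
    and r0i: "\<And>A. A \<in> sets N \<Longrightarrow> measure M {\<omega>\<in>space M. X \<omega> \<in> A \<and> Y \<omega> = 0 \<and> Yt \<omega> \<noteq> 0}
        = (\<integral>x\<in>A. rho0 x * (1 - etaQ x) \<partial>D)"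
    using assms(8) unfolding is_cond_prob2_def D_def by auto
  have r1i: "\<And>A. A \<in> sets N \<Longrightarrow> measure M {\<omega>\<in>space M. X \<omega> \<in> A \<and> Y \<omega> = 1 \<and> Yt \<omega> \<noteq> 1} = 0"
    using assms(9,10) unfolding is_cond_prob2_def D_def by auto
  have bint: "integrable D f" if [measurable]: "f \<in> borel_measurable N" and "\<And>x. \<bar>f x\<bar> \<le> c" for f and c :: real
    by (rule D.integrable_const_bound[of _ c]) (use that in \<open>auto simp: measurable_cong_sets[OF sD refl]\<close>)
  have sint: "set_integrable D A f" if "f \<in> borel_measurable N" "\<And>x. \<bar>f x\<bar> \<le> c" "A \<in> sets N" for f and c :: real and A
    unfolding set_integrable_def
    by (rule integrable_mult_indicator) (use that(3) sD in simp, rule bint[OF that(1,2)])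
  let ?g = "\<lambda>x. rho0 x * (1 - etaQ x) + etaQ x"
  have gb: "\<bar>?g x\<bar> \<le> 2" for x
  proof -
    have "rho0 x * (1 - etaQ x) \<le> 1" using r0b[of x] eQb[of x]
      by (intro mult_le_one) auto
    moreover have "rho0 x * (1 - etaQ x) \<ge> 0" using r0b[of x] eQb[of x] by simp
    ultimately show ?thesis using eQb[of x] by simp
  qed
  have eq: "(\<integral>x\<in>A. etaP x \<partial>D) = (\<integral>x\<in>A. ?g x \<partial>D)" if A: "A \<in> sets N" for A
  proof -
    let ?S0 = "{\<omega>\<in>space M. X \<omega> \<in> A \<and> Y \<omega> = 0 \<and> Yt \<omega> \<noteq> 0}"
    let ?S1 = "{\<omega>\<in>space M. X \<omega> \<in> A \<and> Y \<omega> = 1}"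
    let ?S2 = "{\<omega>\<in>space M. X \<omega> \<in> A \<and> Y \<omega> = 1 \<and> Yt \<omega> \<noteq> 1}"
    have [measurable]: "A \<in> sets N" by fact
    have m0: "?S0 \<in> P.events" "?S1 \<in> P.events" "?S2 \<in> P.events" by measurable
    have seteq: "{\<omega>\<in>space M. X \<omega> \<in> A \<and> Yt \<omega> = 1} = ?S0 \<union> (?S1 - ?S2)"
      proof (intro set_eqI iffI)
      fix w assume "w \<in> {\<omega>\<in>space M. X \<omega> \<in> A \<and> Yt \<omega> = 1}"
      then show "w \<in> ?S0 \<union> (?S1 - ?S2)" using assms(5) by fastforce
    qed (use assms(5) in fastforce)
    have "measure M (?S0 \<union> (?S1 - ?S2)) = measure M ?S0 + measure M (?S1 - ?S2)"
      by (rule P.finite_measure_Union) (use m0 in auto)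
    also have "measure M (?S1 - ?S2) = measure M ?S1 - measure M ?S2"
      by (rule P.finite_measure_Diff) (use m0 in auto)
    finally have "(\<integral>x\<in>A. etaP x \<partial>D) = (\<integral>x\<in>A. rho0 x * (1 - etaQ x) \<partial>D) + (\<integral>x\<in>A. etaQ x \<partial>D)"
      using seteq ePi[OF A] r0i[OF A] eQi[OF A] r1i[OF A] by simp
    also have "\<dots> = (\<integral>x\<in>A. ?g x \<partial>D)"
    proof (rule set_integral_add(2)[symmetric])
      show "set_integrable D A (\<lambda>x. rho0 x * (1 - etaQ x))"
      proof (rule sint[of _ 1])
        fix x show "\<bar>rho0 x * (1 - etaQ x)\<bar> \<le> 1" using r0b[of x] eQb[of x]
          by (simp add: abs_mult mult_le_one)
      qed (use A in auto)
      show "set_integrable D A etaQ" by (rule sint[of _ 1]) (use A eQb in auto)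
    qed
    finally show ?thesis .
  qed
  have ae: "AE x in D. etaP x = ?g x"
  proof (rule density_unique_real)
    show "integrable D etaP" by (rule bint[of _ 1]) (use ePb in auto)
    show "integrable D ?g" by (rule bint[of _ 2]) (use gb in auto)
  next
    fix A assume "A \<in> sets D" then show "(\<integral>x\<in>A. etaP x \<partial>D) = (\<integral>x\<in>A. ?g x \<partial>D)" using eq sD by simp
  qed
  define phi where "phi = (\<lambda>t. if psi t \<le> 1 then t + (1 - t) * psi t else t + 1)"
  have "?g x = phi (etaQ x)" for x
    using r0b[of x] assms(12) unfolding phi_def by (auto simp: algebra_simps)
  then have "AE x in D. etaP x = phi (etaQ x)" using ae by simp
  moreover have "strict_mono_on {0..1} phi" unfolding phi_def by (rule phi_mono) fact
  ultimately show ?thesis unfolding D_def by blast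
qed

end
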